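(* Let $p,N\in\mathbb{N}$, $x_0<\cdots<x_N$, data $y_{n,2k}\in\mathbb{R}$ ($n=0,\dots,N$, $k=0,\dots,p$), and for $n=1,\dots,N$ and $\alpha_n\in\mathbb{R}$ let $$q_n(\alpha_n,x)=\sum_{l=0}^p\Big[\big(a_n^{2l}y_{n-1,2l}-\alpha_n y_{0,2l}\big)\Lambda_l\Big(\tfrac{x_N-x}{x_N-x_0}\Big)+\big(a_n^{2l}y_{n,2l}-\alpha_n y_{N,2l}\big)\Lambda_l\Big(\tfrac{x-x_0}{x_N-x_0}\Big)\Big](x_N-x_0)^{2l}.$$ Then for every $k=0,1,\dots,p$ and every $x\in[x_0,x_N]$, $$\left|\frac{\partial^{2k+1}}{\partial\alpha_n\,\partial x^{2k}}q_n(\alpha_n,x)\right|\le\frac{2\rho\pi}{3}\sum_{l=0}^{p-k}\Big(\frac{x_N-x_0}{\pi}\Big)^{2l}.$$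
   Context: Lidstone polynomials $\Lambda_l$ are defined by $\Lambda_0(x)=x$, $\Lambda_l''=\Lambda_{l-1}$, $\Lambda_l(0)=\Lambda_l(1)=0$ for $l\ge1$. $a_n=\frac{x_n-x_{n-1}}{x_N-x_0}$. $\rho=\max_{0\le k\le p}\max\{|y_{0,2k}|,|y_{N,2k}|\}$. *)

theory Defs
  imports "HOL-Analysis.Analysis" "HOL-Computational_Algebra.Polynomial"
begin

fun lidstone :: "nat \<Rightarrow> real poly" where
  "lidstone 0 = [:0, 1:]"
| "lidstone (Suc l) =
     (THE P. pderiv (pderiv P) = lidstone l \<and> poly P 0 = 0 \<and> poly P 1 = 0)"

abbreviation Lambda :: "nat \<Rightarrow> real \<Rightarrow> real" where
  "Lambda l t \<equiv> poly (lidstone l) t"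

definition a_coef :: "(nat \<Rightarrow> real) \<Rightarrow> nat \<Rightarrow> nat \<Rightarrow> real" where
  "a_coef xs N n = (xs n - xs (n - 1)) / (xs N - xs 0)"

definition rho :: "(nat \<Rightarrow> nat \<Rightarrow> real) \<Rightarrow> nat \<Rightarrow> nat \<Rightarrow> real" where
  "rho y p N = Max ((\<lambda>k. max \<bar>y 0 (2*k)\<bar> \<bar>y N (2*k)\<bar>) ` {0..p})"

definition q_fun :: "nat \<Rightarrow> nat \<Rightarrow> (nat \<Rightarrow> real) \<Rightarrow> (nat \<Rightarrow> nat \<Rightarrow> real)
    \<Rightarrow> nat \<Rightarrow> real \<Rightarrow> real \<Rightarrow> real" where
  "q_fun p N xs y n \<alpha> x =
     (\<Sum>l=0..p.
        ((a_coef xs N n ^ (2*l) * y (n - 1) (2*l) - \<alpha> * y 0 (2*l))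
            * Lambda l ((xs N - x) / (xs N - xs 0))
         + (a_coef xs N n ^ (2*l) * y n (2*l) - \<alpha> * y N (2*l))
            * Lambda l ((x - xs 0) / (xs N - xs 0)))
        * (xs N - xs 0) ^ (2*l))"

end

theory Submission
  imports Defs
begin

lemma pderiv_sum': "pderiv (sum f A) = (\<Sum>i\<in>A. pderiv (f i))"
  by (induct A rule: infinite_finite_induct) (auto simp: pderiv_add)

lemma antideriv_ex: "\<exists>P. pderiv P = (Q :: real poly)"
proof -
  let ?P = "\<Sum>i\<le>degree Q. monom (coeff Q i / of_nat (Suc i)) (Suc i)"
  have "pderiv ?P = (\<Sum>i\<le>degree Q. monom (coeff Q i) i)"
    by (simp add: pderiv_sum' pderiv_monom del: of_nat_Suc)
  also have "\<dots> = Q" by (rule poly_as_sum_of_monoms)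
  finally show ?thesis by blast
qed

lemma pderiv2_zero:
  fixes D :: "real poly"
  assumes "pderiv (pderiv D) = 0" "poly D 0 = 0" "poly D 1 = 0"
  shows "D = 0"
proof -
  have "degree (pderiv D) = 0" using assms(1) pderiv_eq_0_iff by blast
  hence dg: "degree D \<le> 1" by (simp add: degree_pderiv)
  have pD: "poly D t = coeff D 0 + coeff D 1 * t" for t
  proof -
    have "poly D t = (\<Sum>i\<le>1. coeff D i * t ^ i)"
      unfolding poly_altdef
      apply (rule sum.mono_neutral_left) using dg by (auto simp: coeff_eq_0)
    thus ?thesis by simp
  qed
  have c0: "coeff D 0 = 0" using assms(2) pD[of 0] by simp
  have c1: "coeff D 1 = 0" using assms(3) pD[of 1] c0 by simp
  show ?thesis
  proof (rule poly_eqI)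
    fix i show "coeff D i = coeff 0 i"
      using c0 c1 dg coeff_eq_0[of D i] by (cases i; cases "i - 1"; auto)
  qed
qed

lemma lid_unique: "\<exists>!P. pderiv (pderiv P) = Q \<and> poly P 0 = 0 \<and> poly P 1 = (0::real)"
proof -
  obtain P1 where P1: "pderiv P1 = Q" using antideriv_ex by blast
  obtain P0 where P0: "pderiv P0 = P1" using antideriv_ex by blast
  define a where "a = - poly P0 0"
  define b where "b = - poly P0 1 - a"
  define P where "P = P0 + [:a, b:]"
  have "pderiv (pderiv P) = Q \<and> poly P 0 = 0 \<and> poly P 1 = 0"
    unfolding P_def using P0 P1 by (simp add: pderiv_add pderiv_pCons a_def b_def)
  moreover have "R = P" if "pderiv (pderiv R) = Q \<and> poly R 0 = 0 \<and> poly R 1 = 0" for R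
    using pderiv2_zero[of "R - P"] that calculation by (simp add: pderiv_diff)
  ultimately show ?thesis by blast
qed

lemma lid_Suc:
  "pderiv (pderiv (lidstone (Suc l))) = lidstone l"
  "poly (lidstone (Suc l)) 0 = 0" "poly (lidstone (Suc l)) 1 = 0"
  using theI'[OF lid_unique[of "lidstone l"]] by simp_all

lemma funpow_pderiv_pcompose:
  "(pderiv ^^ m) (pcompose p [:b, a:]) = smult (a ^ m) (pcompose ((pderiv ^^ m) p) [:b, a:])"
proof (induction m)
  case 0 then show ?case by simp
next
  case (Suc m)
  show ?case
    by (simp add: Suc pderiv_smult pderiv_pcompose pderiv_pCons mult.commute)
qed

lemma funpow_pderiv_lin:
  "(pderiv ^^ m) (p - smult c q) = (pderiv ^^ m) p - smult c ((pderiv ^^ m) (q::real poly))"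
  by (induction m) (simp_all add: pderiv_diff pderiv_smult)

lemma funpow_pderiv_add:
  "(pderiv ^^ m) (p + q) = (pderiv ^^ m) p + (pderiv ^^ m) (q::real poly)"
  by (induction m) (simp_all add: pderiv_add)

lemma funpow_pderiv_smult:
  "(pderiv ^^ m) (smult c p) = smult c ((pderiv ^^ m) (p::real poly))"
  by (induction m) (simp_all add: pderiv_smult)

lemma funpow_pderiv_sum:
  "(pderiv ^^ m) (sum f A) = (\<Sum>i\<in>A. (pderiv ^^ m) (f i :: real poly))"
  by (induction m) (simp_all add: pderiv_sum')

lemma funpow_pderiv_0: "(pderiv ^^ m) 0 = 0"
  by (induction m) simp_all

lemma lid_deriv_le: "(pderiv ^^ (2*k)) (lidstone (l + k)) = lidstone l"
proof (induction k)
  case 0 then show ?case by simp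
next
  case (Suc k)
  have "(pderiv ^^ (2 * Suc k)) (lidstone (l + Suc k)) =
        (pderiv ^^ (2*k)) (pderiv (pderiv (lidstone (Suc (l + k)))))"
    by (simp add: funpow_Suc_right del: funpow.simps)
  also have "\<dots> = lidstone l" by (simp only: lid_Suc Suc.IH)
  finally show ?case .
qed

lemma lid_deriv_gt: "l < k \<Longrightarrow> (pderiv ^^ (2*k)) (lidstone l) = 0"
proof -
  assume "l < k"
  then obtain d where k: "k = Suc (l + d)" using less_imp_Suc_add by blast
  have e: "2*k = 2*d + (2 + 2*l)" using k by simp
  have l0: "(pderiv ^^ (2*l)) (lidstone l) = lidstone 0"
    using lid_deriv_le[where k=l and l=0] by (simp only: add_0)
  have "(pderiv ^^ (2*k)) (lidstone l) = (pderiv ^^ (2*d)) ((pderiv ^^ 2) ((pderiv ^^ (2*l)) (lidstone l)))"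
    by (simp only: e funpow_add comp_apply)
  also have "\<dots> = 0" by (simp only: l0) (simp add: numeral_2_eq_2 pderiv_pCons funpow_pderiv_0)
  finally show ?thesis .
qed

lemma deriv_poly_fun: "deriv (poly p) = poly (pderiv p)"
  by (rule ext) (rule DERIV_imp_deriv, simp)

lemma funpow_deriv_poly: "(deriv ^^ m) (poly p) = poly ((pderiv ^^ m) p)"
  by (induction m) (simp_all add: deriv_poly_fun)

declare lidstone.simps(2)[simp del]

lemma sin_ge_cubic: "0 \<le> (x::real) \<Longrightarrow> x - x^3/6 \<le> sin x"
proof -
  assume x: "0 \<le> x"
  have "\<bar>sin x - (\<Sum>m<3. sin_coeff m * x ^ m)\<bar> \<le> inverse (fact 3) * \<bar>x\<bar> ^ 3"
    using Maclaurin_sin_bound[of x 3] .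
  moreover have "(\<Sum>m<3. sin_coeff m * x ^ m) = x"
    by (simp add: numeral_3_eq_3 sin_coeff_Suc cos_coeff_def)
  moreover have "inverse (fact 3) * \<bar>x\<bar> ^ 3 = x^3/6"
  proof -
    have "(fact 3 :: real) = 6" by (simp add: fact_numeral)
    thus ?thesis using x by simp
  qed
  ultimately show ?thesis by linarith
qed

lemma sin_lower_half: "0 \<le> s \<Longrightarrow> s \<le> 1/2 \<Longrightarrow> (3*pi/4) * (s*(1-s)) \<le> sin (pi* s)"
proof -
  assume s: "0 \<le> s" "s \<le> 1/2"
  have p0: "(31415926535899::real) / 10^13 \<le> 16/5" by simp
  have p1: "pi \<le> 16/5" using pi_approx(2) p0 by linarith
  have "pi*pi \<le> (16/5) * (16/5)" using p1 pi_gt_zero by (intro mult_mono) auto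
  hence pp: "pi^2 \<le> 256/25" by (simp add: power2_eq_square)
  have q: "(3/4)*(1-s) \<le> 1 - pi^2 * s^2/6"
  proof -
    have "pi^2 * s^2 \<le> (256/25) * s^2" using pp by (intro mult_right_mono) auto
    moreover have "(256/25) * s^2 / 6 + (3/4)*(1-s) \<le> 1"
    proof -
      have "s * s \<le> s * (1/2)" using s by (intro mult_left_mono) auto
      hence "s^2 \<le> s / 2" by (simp add: power2_eq_square)
      hence "(256/25) * s^2 / 6 \<le> (64/75) * s" by linarith
      moreover have "(3/4)*(1-s) = 3/4 - (3/4) * s" by (simp add: right_diff_distrib)
      ultimately show ?thesis using s by linarith
    qed
    ultimately show ?thesis by linarith
  qed
  have "(3*pi/4) * (s*(1-s)) = (pi* s) * ((3/4)*(1-s))" by simp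
  also have "\<dots> \<le> (pi* s) * (1 - pi^2 * s^2/6)" using q s by (intro mult_left_mono) auto
  also have "\<dots> = (pi* s) - (pi* s)^3/6" by (simp add: algebra_simps power2_eq_square power3_eq_cube)
  also have "\<dots> \<le> sin (pi* s)" using s by (intro sin_ge_cubic) auto
  finally show ?thesis .
qed

lemma sin_lower: "0 \<le> s \<Longrightarrow> s \<le> 1 \<Longrightarrow> (3*pi/4) * (s*(1-s)) \<le> sin (pi* s)"
proof -
  assume s: "0 \<le> s" "s \<le> 1"
  show ?thesis
  proof (cases "s \<le> 1/2")
    case True then show ?thesis using s sin_lower_half by auto
  next
    case False
    have "(3*pi/4) * ((1-s)*(1-(1-s))) \<le> sin (pi*(1-s))"
      using False s by (intro sin_lower_half) auto
    moreover have "sin (pi*(1-s)) = sin (pi* s)"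
      by (simp add: right_diff_distrib sin_diff)
    ultimately show ?thesis by (simp add: mult.commute)
  qed
qed

lemma concave_nonneg:
  fixes f f' f'' :: "real \<Rightarrow> real"
  assumes d1: "\<And>x. DERIV f x :> f' x" and d2: "\<And>x. DERIV f' x :> f'' x"
    and neg: "\<And>x. x \<in> {0..1} \<Longrightarrow> f'' x \<le> 0"
    and e: "f 0 = 0" "f 1 = 0" and x: "x \<in> {0..1}"
  shows "0 \<le> f x"
proof -
  have "concave_on {0..1} f"
    by (rule f''_le0_imp_concave[where f'=f' and f''=f'']) (use d1 d2 neg in auto)
  from concave_onD[OF this, of x 0 1] x
  have "(1 - x) * f 0 + x * f 1 \<le> f ((1 - x) *\<^sub>R 0 + x *\<^sub>R 1)" by auto
  thus ?thesis using e by simp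
qed

lemma dsin: "DERIV (\<lambda>s. sin (pi * s)) x :> cos (pi * x) * pi"
  using DERIV_fun_sin[OF DERIV_cmult[OF DERIV_ident, of pi]] by simp
lemma dcos: "DERIV (\<lambda>s. cos (pi * s)) x :> - sin (pi * x) * pi"
  using DERIV_fun_cos[OF DERIV_cmult[OF DERIV_ident, of pi]] by simp

definition R :: "nat \<Rightarrow> real poly" where "R j = smult ((-1)^j) (lidstone j)"
definition T :: "nat \<Rightarrow> real poly" where "T j = R j + pcompose (R j) [:1, -1:]"

lemma R_d2: "pderiv (pderiv (R (Suc j))) = - R j"
  unfolding R_def by (simp add: pderiv_smult pderiv_minus lid_Suc)

lemma R_end: "poly (R (Suc j)) 0 = 0" "poly (R (Suc j)) 1 = 0"
  unfolding R_def by (simp_all add: lid_Suc)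

lemma R_nonneg: "s \<in> {0..1} \<Longrightarrow> 0 \<le> poly (R j) s"
proof (induction j arbitrary: s)
  case 0 then show ?case by (simp add: R_def)
next
  case (Suc j)
  have d: "DERIV (poly (pderiv (R (Suc j)))) x :> - poly (R j) x" for x
    using poly_DERIV[of "pderiv (R (Suc j))" x] by (simp add: R_d2)
  show ?case
    apply (rule concave_nonneg[where f="poly (R (Suc j))" and x=s and f'="poly (pderiv (R (Suc j)))" and f''="\<lambda>x. - poly (R j) x"])
    using Suc d by (auto simp: R_end)
qed

lemma T_d2: "pderiv (pderiv (T (Suc j))) = - T j"
proof -
  have "pderiv (pderiv (pcompose p [:1, -1:])) = pcompose (pderiv (pderiv p)) [:1, -1::real:]" for p
    using funpow_pderiv_pcompose[of 2 p 1 "-1"] by (simp add: numeral_2_eq_2)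
  thus ?thesis unfolding T_def by (simp add: pderiv_add R_d2 pcompose_uminus)
qed

lemma poly_T: "poly (T j) s = poly (R j) s + poly (R j) (1 - s)"
  unfolding T_def by (simp add: poly_pcompose)

lemma T_end: "poly (T (Suc j)) 0 = 0" "poly (T (Suc j)) 1 = 0"
  by (simp_all add: poly_T R_end)

lemma T0: "T 0 = 1"
  unfolding T_def R_def by (simp add: pcompose_pCons one_pCons)

lemma T1: "poly (T 1) s = s * (1 - s) / 2"
proof -
  define D where "D = T 1 - [:0, 1/2, -1/2:]"
  have "pderiv (pderiv D) = 0"
  proof -
    have m1: "(-1::real poly) = [:-1:]" by (simp add: one_pCons)
    show ?thesis unfolding D_def using T_d2[of 0] by (simp add: pderiv_diff T0 pderiv_pCons m1)
  qed
  moreover have "poly D 0 = 0" "poly D 1 = 0"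
    unfolding D_def using T_end[of 0] by simp_all
  ultimately have "D = 0" by (rule pderiv2_zero)
  hence "poly (T 1) s = poly [:0, 1/2, -1/2:] s" unfolding D_def by simp
  thus ?thesis by (simp add: algebra_simps)
qed

lemma T_bound: "s \<in> {0..1} \<Longrightarrow> poly (T (Suc j)) s \<le> (2/(3*pi)) / pi^(2*j) * sin (pi* s)"
proof (induction j arbitrary: s)
  case 0
  have "s*(1-s)/2 \<le> (2/(3*pi)) * sin (pi* s)"
    using sin_lower[of s] 0 pi_gt_zero by (auto simp: field_simps)
  moreover have "poly (T (Suc 0)) s = s*(1-s)/2" using T1 by simp
  ultimately show ?case by simp
next
  case (Suc j)
  define C where "C = (2/(3*pi)) / pi^(2*Suc j)"
  have CC: "C * pi^2 = (2/(3*pi)) / pi^(2*j)"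
    unfolding C_def using pi_gt_zero by (simp add: field_simps power_add power2_eq_square)
  let ?f = "\<lambda>s. C * sin (pi* s) - poly (T (Suc (Suc j))) s"
  have "0 \<le> ?f s"
  proof (rule concave_nonneg[where f="?f" and x=s and f'="\<lambda>s. C * (cos (pi* s) * pi) - poly (pderiv (T (Suc (Suc j)))) s"
        and f''="\<lambda>s. C * (- sin (pi* s) * pi * pi) - poly (pderiv (pderiv (T (Suc (Suc j))))) s"])
    show "DERIV ?f x :> C * (cos (pi * x) * pi) - poly (pderiv (T (Suc (Suc j)))) x" for x
      by (intro DERIV_diff DERIV_cmult dsin poly_DERIV)
    show "DERIV (\<lambda>s. C * (cos (pi* s) * pi) - poly (pderiv (T (Suc (Suc j)))) s) x :>
       C * (- sin (pi * x) * pi * pi) - poly (pderiv (pderiv (T (Suc (Suc j))))) x" for x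
      using DERIV_diff[OF DERIV_cmult[OF DERIV_cmult_right[OF dcos, of pi], of C] poly_DERIV[of "pderiv (T (Suc (Suc j)))" x]] by simp
    show "C * (- sin (pi * x) * pi * pi) - poly (pderiv (pderiv (T (Suc (Suc j))))) x \<le> 0"
      if "x \<in> {0..1}" for x
    proof -
      have "C * (- sin (pi * x) * pi * pi) = - ((C * pi^2) * sin (pi * x))" by (simp add: power2_eq_square)
      thus ?thesis using Suc.IH[OF that] CC T_d2[of "Suc j"] by simp
    qed
    show "?f 0 = 0" "?f 1 = 0" by (simp_all add: T_end)
    show "s \<in> {0..1}" by fact
  qed
  then show ?case unfolding C_def by simp
qed

lemma lid_pair_bound:
  assumes "s \<in> {0..1}"
  shows "\<bar>poly (lidstone j) s\<bar> + \<bar>poly (lidstone j) (1 - s)\<bar> \<le> 2 * pi / 3 / pi^(2*j)"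
proof -
  have s1: "1 - s \<in> {0..1}" using assms by auto
  have ab: "\<bar>poly (lidstone j) t\<bar> = poly (R j) t" if "t \<in> {0..1}" for t
  proof -
    have "\<bar>poly (lidstone j) t\<bar> = \<bar>poly (R j) t\<bar>" by (simp add: R_def abs_mult)
    thus ?thesis using R_nonneg[OF that] by simp
  qed
  have eq: "\<bar>poly (lidstone j) s\<bar> + \<bar>poly (lidstone j) (1 - s)\<bar> = poly (T j) s"
    using ab[OF assms] ab[OF s1] by (simp add: poly_T)
  show ?thesis
  proof (cases j)
    case 0
    then show ?thesis using eq T0 pi_gt3 by simp
  next
    case (Suc i)
    have "poly (T j) s \<le> (2/(3*pi)) / pi^(2*i) * sin (pi* s)" using T_bound assms Suc by simp
    also have "\<dots> \<le> (2/(3*pi)) / pi^(2*i)" using pi_gt_zero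
      by (intro mult_left_le) auto
    also have "\<dots> = 2 * pi / 3 / pi^(2*j)" using Suc pi_gt_zero by (simp add: field_simps power_add)
    finally show ?thesis using eq by simp
  qed
qed

lemma xs_mono: "(\<And>i. i < N \<Longrightarrow> xs i < xs (Suc i)) \<Longrightarrow> m \<le> N \<Longrightarrow> xs 0 \<le> (xs m :: real)"
proof (induction m)
  case 0 then show ?case by simp
next
  case (Suc m)
  then have "xs 0 \<le> xs m" by simp
  also have "xs m < xs (Suc m)" using Suc by simp
  finally show ?case by simp
qed

lemma sum_shift_if:
  fixes g :: "nat \<Rightarrow> real"
  assumes "k \<le> p"
  shows "(\<Sum>l=0..p. if k \<le> l then g (l - k) else 0) = (\<Sum>j=0..p-k. g j)"
proof -
  have "(\<Sum>l=0..p. if k \<le> l then g (l - k) else 0) = (\<Sum>l\<in>{l\<in>{0..p}. k \<le> l}. g (l - k))"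
    by (rule sum.inter_filter[symmetric]) simp
  also have "{l\<in>{0..p}. k \<le> l} = {0 + k..(p - k) + k}" using assms by auto
  also have "(\<Sum>l\<in>{0 + k..(p - k) + k}. g (l - k)) = (\<Sum>j=0..p-k. g (j + k - k))"
    by (rule sum.shift_bounds_cl_nat_ivl)
  finally show ?thesis by simp
qed

lemma rho_ge:
  assumes "l \<le> p"
  shows "\<bar>y 0 (2*l)\<bar> \<le> rho y p N" "\<bar>y N (2*l)\<bar> \<le> rho y p N"
proof -
  have "max \<bar>y 0 (2*l)\<bar> \<bar>y N (2*l)\<bar> \<le> rho y p N"
    unfolding rho_def by (rule Max_ge) (use assms in auto)
  thus "\<bar>y 0 (2*l)\<bar> \<le> rho y p N" "\<bar>y N (2*l)\<bar> \<le> rho y p N" by auto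
qed

theorem proposition4p1:
  fixes p N :: nat and xs :: "nat \<Rightarrow> real" and y :: "nat \<Rightarrow> nat \<Rightarrow> real"
    and n k :: nat and \<alpha> x :: real
  assumes incr: "\<And>i. i < N \<Longrightarrow> xs i < xs (Suc i)"
    and n: "1 \<le> n" "n \<le> N"
    and k: "k \<le> p"
    and x: "x \<in> {xs 0..xs N}"
  shows "\<bar>deriv (\<lambda>\<beta>. ((deriv ^^ (2*k)) (\<lambda>t. q_fun p N xs y n \<beta> t)) x) \<alpha>\<bar>
           \<le> 2 * rho y p N * pi / 3 * (\<Sum>l=0..p-k. ((xs N - xs 0) / pi) ^ (2*l))"
proof -
  define L where "L = xs N - xs 0"
  have "xs 0 \<le> xs (N - 1)" using xs_mono[of N xs "N - 1"] incr by simp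
  also have "xs (N - 1) < xs N" using incr[of "N - 1"] n by simp
  finally have Lpos: "L > 0" unfolding L_def by simp
  define a where "a = a_coef xs N n"
  define lin1 where "lin1 = [:xs N / L, -1/L:]"
  define lin2 where "lin2 = [:- xs 0 / L, 1/L:]"
  have pl1: "poly lin1 t = (xs N - t) / L" for t
    unfolding lin1_def using Lpos by (simp add: field_simps)
  have pl2: "poly lin2 t = (t - xs 0) / L" for t
    unfolding lin2_def using Lpos by (simp add: field_simps)
  define PA where "PA = (\<Sum>l=0..p. smult (L^(2*l)) (smult (a^(2*l) * y (n-1) (2*l)) (pcompose (lidstone l) lin1)
                                            + smult (a^(2*l) * y n (2*l)) (pcompose (lidstone l) lin2)))"
  define PB where "PB = (\<Sum>l=0..p. smult (L^(2*l)) (smult (y 0 (2*l)) (pcompose (lidstone l) lin1)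
                                            + smult (y N (2*l)) (pcompose (lidstone l) lin2)))"
  have qeq: "(\<lambda>t. q_fun p N xs y n \<beta> t) = poly (PA - smult \<beta> PB)" for \<beta>
  proof
    fix t
    show "q_fun p N xs y n \<beta> t = poly (PA - smult \<beta> PB) t"
      unfolding q_fun_def PA_def PB_def poly_diff poly_smult poly_sum poly_add poly_pcompose pl1 pl2
        a_def[symmetric] L_def[symmetric]
      by (simp add: sum_distrib_left sum_subtractf[symmetric] algebra_simps)
  qed
  define m where "m = 2*k"
  have val: "((deriv ^^ m) (\<lambda>t. q_fun p N xs y n \<beta> t)) x
      = poly ((pderiv ^^ m) PA) x - \<beta> * poly ((pderiv ^^ m) PB) x" for \<beta>
    unfolding qeq funpow_deriv_poly funpow_pderiv_lin by simp
  have "deriv (\<lambda>\<beta>. ((deriv ^^ m) (\<lambda>t. q_fun p N xs y n \<beta> t)) x) \<alpha> = - poly ((pderiv ^^ m) PB) x"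
    unfolding val
    by (rule DERIV_imp_deriv) (rule derivative_eq_intros refl | simp)+
  hence lhs: "\<bar>deriv (\<lambda>\<beta>. ((deriv ^^ (2*k)) (\<lambda>t. q_fun p N xs y n \<beta> t)) x) \<alpha>\<bar>
      = \<bar>poly ((pderiv ^^ m) PB) x\<bar>" unfolding m_def by simp
  define u where "u = (x - xs 0) / L"
  have u01: "u \<in> {0..1}" using x Lpos unfolding u_def L_def by (auto simp: field_simps)
  have u1: "(xs N - x) / L = 1 - u" unfolding u_def L_def using Lpos L_def by (simp add: field_simps)
  define tm where "tm l = L^(2*l) * (y 0 (2*l) * ((-1/L)^m * poly ((pderiv ^^ m) (lidstone l)) (1 - u))
                                   + y N (2*l) * ((1/L)^m * poly ((pderiv ^^ m) (lidstone l)) u))" for l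
  have PBval: "poly ((pderiv ^^ m) PB) x = (\<Sum>l=0..p. tm l)"
    unfolding PB_def funpow_pderiv_sum funpow_pderiv_add funpow_pderiv_smult lin1_def lin2_def
      funpow_pderiv_pcompose
    unfolding lin1_def[symmetric] lin2_def[symmetric] poly_sum poly_smult poly_add poly_pcompose pl1 pl2
      u1 u_def[symmetric] L_def[symmetric] tm_def by simp
  define b where "b l = (if k \<le> l then rho y p N * (2*pi/3) * (L/pi)^(2*(l-k)) else 0)" for l
  have tb: "\<bar>tm l\<bar> \<le> b l" if l: "l \<in> {0..p}" for l
  proof (cases "k \<le> l")
    case False
    hence "(pderiv ^^ m) (lidstone l) = 0" unfolding m_def by (intro lid_deriv_gt) simp
    thus ?thesis using False unfolding tm_def b_def by simp
  next
    case True
    define j where "j = l - k"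
    have lj: "l = j + k" using True j_def by simp
    have dl: "(pderiv ^^ m) (lidstone l) = lidstone j" unfolding m_def lj by (rule lid_deriv_le)
    have pw1: "(-1/L)^m = 1 / L^m" "(1/L)^m = 1 / L^m" unfolding m_def
      by (simp_all add: power_mult power_divide)
    have Lm: "L^(2*l) * (1 / L^m) = L^(2*j)" unfolding m_def lj using Lpos
      by (simp add: power_add field_simps)
    have teq: "tm l = L^(2*j) * (y 0 (2*l) * Lambda j (1 - u) + y N (2*l) * Lambda j u)"
      unfolding tm_def dl pw1 Lm[symmetric] by (simp add: algebra_simps)
    have r0: "\<bar>y 0 (2*l)\<bar> \<le> rho y p N" and rN: "\<bar>y N (2*l)\<bar> \<le> rho y p N"
      using rho_ge[of l p y N] l by auto
    have "\<bar>y 0 (2*l) * Lambda j (1 - u) + y N (2*l) * Lambda j u\<bar>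
        \<le> \<bar>y 0 (2*l)\<bar> * \<bar>Lambda j (1 - u)\<bar> + \<bar>y N (2*l)\<bar> * \<bar>Lambda j u\<bar>"
      using abs_triangle_ineq[of "y 0 (2*l) * Lambda j (1 - u)" "y N (2*l) * Lambda j u"]
      by (simp add: abs_mult)
    also have "\<dots> \<le> rho y p N * \<bar>Lambda j (1 - u)\<bar> + rho y p N * \<bar>Lambda j u\<bar>"
      using r0 rN by (intro add_mono mult_right_mono) auto
    also have "\<dots> = rho y p N * (\<bar>Lambda j u\<bar> + \<bar>Lambda j (1 - u)\<bar>)" by (simp add: algebra_simps)
    also have "\<dots> \<le> rho y p N * (2 * pi / 3 / pi^(2*j))"
      using lid_pair_bound[OF u01, of j] r0 by (intro mult_left_mono) auto
    finally have h: "\<bar>y 0 (2*l) * Lambda j (1 - u) + y N (2*l) * Lambda j u\<bar> \<le> rho y p N * (2 * pi / 3 / pi^(2*j))" .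
    have "\<bar>tm l\<bar> = L^(2*j) * \<bar>y 0 (2*l) * Lambda j (1 - u) + y N (2*l) * Lambda j u\<bar>"
      unfolding teq using Lpos by (simp add: abs_mult)
    also have "\<dots> \<le> L^(2*j) * (rho y p N * (2 * pi / 3 / pi^(2*j)))"
      using h Lpos by (intro mult_left_mono) auto
    also have "\<dots> = b l" unfolding b_def j_def[symmetric] using True
      by (simp add: power_divide)
    finally show ?thesis .
  qed
  have "\<bar>\<Sum>l=0..p. tm l\<bar> \<le> (\<Sum>l=0..p. \<bar>tm l\<bar>)" by (rule sum_abs)
  also have "\<dots> \<le> (\<Sum>l=0..p. b l)" by (rule sum_mono) (rule tb)
  also have "\<dots> = (\<Sum>j=0..p-k. rho y p N * (2*pi/3) * (L/pi)^(2*j))"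
    unfolding b_def by (rule sum_shift_if[OF k])
  also have "\<dots> = 2 * rho y p N * pi / 3 * (\<Sum>l=0..p-k. ((xs N - xs 0) / pi) ^ (2*l))"
    unfolding L_def[symmetric] by (simp add: sum_distrib_left mult.commute mult.left_commute)
  finally show ?thesis using lhs PBval by simp
qed

end
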